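(* Let $(H,G)$ be a finite Gelfand pair with notation as in the context, where index $i=1$ corresponds to the diagonal orbit $O_1$ and index $j=1$ to the trivial representation $T_1$. Then the matrix $C_{ij}=(\mathrm{X}_i,\Psi_j)$ satisfies $$\sum_i C_{ij}=\delta_{1j}|X|,\qquad \sum_j C_{ij}=\delta_{i1}|X| .$$
   Context: Let $G$ be a finite group, $H\le G$ a subgroup, $X=G/H$ with the left $G$-action, $x_0=H\in X$. $\mathbb{C}[X\times X]^G$ is the space of complex functions on $X\times X$ invariant under the diagonal $G$-action, with convolution $(f\times g)(x,z)=\sum_{y\in X}f(x,y)g(y,z)$ and Hermitian inner product $(a,b)=\sum_{x,y\in X}a(x,y)\overline{b(x,y)}$. $(H,G)$ is a Gelfand pair if $(\mathbb{C}[X\times X]^G,\times)$ is commutative; equivalently the permutation representation $\mathbb{C}[X]$, $(gf)(x)=f(g^{-1}x)$, decomposes as $\mathbb{C}[X]=\bigoplus_{j}T_j$ with $T_j$ pairwise non-isomorphic irreducible $G$-subrepresentations; $T_1$ denotes the constants. Each $T_j$ carries a $G$-invariant Hermitian inner product $\langle\cdot,\cdot\rangle$ (linear in the first variable) and contains an $H$-invariant vector $\theta_j$ with $\langle\theta_j,\theta_j\rangle=1$. The spherical function of $T_j$ is $\psi_j(g)=\frac{\dim T_j}{|X|}\langle T_j(g)\theta_j,\theta_j\rangle$; $\Psi_j(gH,g'H):=\psi_j(g^{-1}g')$. The $G$-orbits on $X\times X$ are $O_1,\dots,O_k$, with $O_1$ the diagonal, $\mathrm{X}_i$ is the characteristic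 function of $O_i$, and $o_i=\{x\in X:(x_0,x)\in O_i\}$. *)

theory Defs
  imports Complex_Main "HOL-Algebra.Left_Coset" "HOL-Library.Function_Algebras"
begin

definition cscale :: "complex \<Rightarrow> ('b \<Rightarrow> complex) \<Rightarrow> ('b \<Rightarrow> complex)" where
  "cscale c f = (\<lambda>x. c * f x)"

text \<open>C[X]: complex functions on the coset space X = G/H (zero outside X).\<close>
definition permsp :: "('a, 'b) monoid_scheme \<Rightarrow> 'a set \<Rightarrow> ('a set \<Rightarrow> complex) set" where
  "permsp G H = {f. \<forall>x. x \<notin> lcosets\<^bsub>G\<^esub> H \<longrightarrow> f x = 0}"

definition act :: "('a, 'b) monoid_scheme \<Rightarrow> 'a set \<Rightarrow> 'a \<Rightarrow> ('a set \<Rightarrow> complex) \<Rightarrow> ('a set \<Rightarrow> complex)" where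
  "act G H g f = (\<lambda>x. if x \<in> lcosets\<^bsub>G\<^esub> H then f ((inv\<^bsub>G\<^esub> g) <#\<^bsub>G\<^esub> x) else 0)"

definition subrep :: "('a, 'b) monoid_scheme \<Rightarrow> 'a set \<Rightarrow> ('a set \<Rightarrow> complex) set \<Rightarrow> bool" where
  "subrep G H W \<longleftrightarrow> module.subspace cscale W \<and> W \<subseteq> permsp G H \<and>
     (\<forall>g\<in>carrier G. \<forall>f\<in>W. act G H g f \<in> W)"

definition irred_subrep :: "('a, 'b) monoid_scheme \<Rightarrow> 'a set \<Rightarrow> ('a set \<Rightarrow> complex) set \<Rightarrow> bool" where
  "irred_subrep G H W \<longleftrightarrow> subrep G H W \<and> W \<noteq> {0} \<and>
     (\<forall>U. subrep G H U \<and> U \<subseteq> W \<longrightarrow> U = {0} \<or> U = W)"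

definition iso_subreps :: "('a, 'b) monoid_scheme \<Rightarrow> 'a set \<Rightarrow> ('a set \<Rightarrow> complex) set \<Rightarrow> ('a set \<Rightarrow> complex) set \<Rightarrow> bool" where
  "iso_subreps G H V W \<longleftrightarrow> (\<exists>\<phi>. Vector_Spaces.linear cscale cscale \<phi> \<and> bij_betw \<phi> V W \<and>
     (\<forall>g\<in>carrier G. \<forall>f\<in>V. \<phi> (act G H g f) = act G H g (\<phi> f)))"

definition direct_sum_decomp :: "('a, 'b) monoid_scheme \<Rightarrow> 'a set \<Rightarrow> nat \<Rightarrow> (nat \<Rightarrow> ('a set \<Rightarrow> complex) set) \<Rightarrow> bool" where
  "direct_sum_decomp G H m T \<longleftrightarrow> (\<forall>j\<in>{1..m}. T j \<subseteq> permsp G H) \<and>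
     (\<forall>f\<in>permsp G H. \<exists>!fs. fs \<in> (\<Pi>\<^sub>E j\<in>{1..m}. T j) \<and> f = (\<Sum>j\<in>{1..m}. fs j))"

definition constants :: "('a, 'b) monoid_scheme \<Rightarrow> 'a set \<Rightarrow> ('a set \<Rightarrow> complex) set" where
  "constants G H = {f \<in> permsp G H. \<exists>c. \<forall>x\<in>lcosets\<^bsub>G\<^esub> H. f x = c}"

definition ginv_inner :: "('a, 'b) monoid_scheme \<Rightarrow> 'a set \<Rightarrow> ('a set \<Rightarrow> complex) set \<Rightarrow>
    (('a set \<Rightarrow> complex) \<Rightarrow> ('a set \<Rightarrow> complex) \<Rightarrow> complex) \<Rightarrow> bool" where
  "ginv_inner G H W ip \<longleftrightarrow>
     (\<forall>u\<in>W. \<forall>v\<in>W. \<forall>w\<in>W. \<forall>a b. ip (cscale a u + cscale b v) w = a * ip u w + b * ip v w) \<and>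
     (\<forall>u\<in>W. \<forall>v\<in>W. ip v u = cnj (ip u v)) \<and>
     (\<forall>u\<in>W. u \<noteq> 0 \<longrightarrow> Im (ip u u) = 0 \<and> Re (ip u u) > 0) \<and>
     (\<forall>g\<in>carrier G. \<forall>u\<in>W. \<forall>v\<in>W. ip (act G H g u) (act G H g v) = ip u v)"

definition spherical :: "('a, 'b) monoid_scheme \<Rightarrow> 'a set \<Rightarrow> ('a set \<Rightarrow> complex) set \<Rightarrow>
    (('a set \<Rightarrow> complex) \<Rightarrow> ('a set \<Rightarrow> complex) \<Rightarrow> complex) \<Rightarrow> ('a set \<Rightarrow> complex) \<Rightarrow> 'a \<Rightarrow> complex" where
  "spherical G H W ip \<theta> g =
     of_nat (vector_space.dim cscale W) / of_nat (card (lcosets\<^bsub>G\<^esub> H)) * ip (act G H g \<theta>) \<theta>"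

definition rep :: "('a, 'b) monoid_scheme \<Rightarrow> 'a set \<Rightarrow> 'a set \<Rightarrow> 'a" where
  "rep G H x = (SOME g. g \<in> carrier G \<and> x = g <#\<^bsub>G\<^esub> H)"

definition Psi :: "('a, 'b) monoid_scheme \<Rightarrow> 'a set \<Rightarrow> ('a set \<Rightarrow> complex) set \<Rightarrow>
    (('a set \<Rightarrow> complex) \<Rightarrow> ('a set \<Rightarrow> complex) \<Rightarrow> complex) \<Rightarrow> ('a set \<Rightarrow> complex) \<Rightarrow> 'a set \<times> 'a set \<Rightarrow> complex" where
  "Psi G H W ip \<theta> p =
     spherical G H W ip \<theta> (inv\<^bsub>G\<^esub> (rep G H (fst p)) \<otimes>\<^bsub>G\<^esub> rep G H (snd p))"

definition inv_kernels :: "('a, 'b) monoid_scheme \<Rightarrow> 'a set \<Rightarrow> ('a set \<times> 'a set \<Rightarrow> complex) set" where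
  "inv_kernels G H = {F. (\<forall>p. p \<notin> (lcosets\<^bsub>G\<^esub> H) \<times> (lcosets\<^bsub>G\<^esub> H) \<longrightarrow> F p = 0) \<and>
     (\<forall>g\<in>carrier G. \<forall>x\<in>lcosets\<^bsub>G\<^esub> H. \<forall>y\<in>lcosets\<^bsub>G\<^esub> H. F (g <#\<^bsub>G\<^esub> x, g <#\<^bsub>G\<^esub> y) = F (x, y))}"

definition conv :: "('a, 'b) monoid_scheme \<Rightarrow> 'a set \<Rightarrow> ('a set \<times> 'a set \<Rightarrow> complex) \<Rightarrow>
    ('a set \<times> 'a set \<Rightarrow> complex) \<Rightarrow> ('a set \<times> 'a set \<Rightarrow> complex)" where
  "conv G H F1 F2 = (\<lambda>(x, z). \<Sum>y\<in>lcosets\<^bsub>G\<^esub> H. F1 (x, y) * F2 (y, z))"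

definition gelfand_pair :: "('a, 'b) monoid_scheme \<Rightarrow> 'a set \<Rightarrow> bool" where
  "gelfand_pair G H \<longleftrightarrow> (\<forall>F1\<in>inv_kernels G H. \<forall>F2\<in>inv_kernels G H. conv G H F1 F2 = conv G H F2 F1)"

definition inner_XX :: "('a, 'b) monoid_scheme \<Rightarrow> 'a set \<Rightarrow> ('a set \<times> 'a set \<Rightarrow> complex) \<Rightarrow>
    ('a set \<times> 'a set \<Rightarrow> complex) \<Rightarrow> complex" where
  "inner_XX G H a b = (\<Sum>x\<in>lcosets\<^bsub>G\<^esub> H. \<Sum>y\<in>lcosets\<^bsub>G\<^esub> H. a (x, y) * cnj (b (x, y)))"

definition orbits_XX :: "('a, 'b) monoid_scheme \<Rightarrow> 'a set \<Rightarrow> ('a set \<times> 'a set) set set" where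
  "orbits_XX G H = {{(g <#\<^bsub>G\<^esub> x, g <#\<^bsub>G\<^esub> y) | g. g \<in> carrier G} | x y.
      x \<in> lcosets\<^bsub>G\<^esub> H \<and> y \<in> lcosets\<^bsub>G\<^esub> H}"

definition diag_XX :: "('a, 'b) monoid_scheme \<Rightarrow> 'a set \<Rightarrow> ('a set \<times> 'a set) set" where
  "diag_XX G H = {(x, x) | x. x \<in> lcosets\<^bsub>G\<^esub> H}"

definition charfun :: "('c) set \<Rightarrow> 'c \<Rightarrow> complex" where
  "charfun S p = (if p \<in> S then 1 else 0)"

end

theory Submission
  imports Defs "HOL-Computational_Algebra.Fundamental_Theorem_Algebra"
begin

no_notation (ASCII) subset_mset  (infix \<open><#\<close> 50)


lemma vs_cscale: "vector_space cscale"
  unfolding vector_space_def cscale_def by (auto simp: fun_eq_iff algebra_simps)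

interpretation V: vector_space cscale by (rule vs_cscale)

lemma cscale_apply[simp]: "cscale c f x = c * f x" by (simp add: cscale_def)

lemma sum_fun_apply: "(\<Sum>i\<in>I. (f i :: 'c \<Rightarrow> complex)) x = (\<Sum>i\<in>I. f i x)"
  by (induction I rule: infinite_finite_induct) auto

lemma subspace_iff: "V.subspace W \<longleftrightarrow> 0 \<in> W \<and> (\<forall>x\<in>W. \<forall>y\<in>W. x + y \<in> W) \<and> (\<forall>c. \<forall>x\<in>W. cscale c x \<in> W)"
  by (simp add: V.subspace_def)



locale gp =
  fixes G :: "('a, 'b) monoid_scheme" (structure) and H :: "'a set"
    and m :: nat and T :: "nat \<Rightarrow> ('a set \<Rightarrow> complex) set"
    and ip :: "nat \<Rightarrow> ('a set \<Rightarrow> complex) \<Rightarrow> ('a set \<Rightarrow> complex) \<Rightarrow> complex"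
    and \<theta> :: "nat \<Rightarrow> 'a set \<Rightarrow> complex"
    and k :: nat and Orb :: "nat \<Rightarrow> ('a set \<times> 'a set) set"
  assumes grp: "group G" and finG: "finite (carrier G)" and sbg: "subgroup H G"
    and gelf: "gelfand_pair G H"
    and dsd: "direct_sum_decomp G H m T"
    and irr: "\<forall>j\<in>{1..m}. irred_subrep G H (T j)"
    and noniso: "\<forall>i\<in>{1..m}. \<forall>j\<in>{1..m}. i \<noteq> j \<longrightarrow> \<not> iso_subreps G H (T i) (T j)"
    and m1: "1 \<le> m" and T1: "T 1 = constants G H"
    and ginv: "\<forall>j\<in>{1..m}. ginv_inner G H (T j) (ip j)"
    and th: "\<forall>j\<in>{1..m}. \<theta> j \<in> T j \<and> (\<forall>h\<in>H. act G H h (\<theta> j) = \<theta> j) \<and> ip j (\<theta> j) (\<theta> j) = 1"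
    and orbb: "bij_betw Orb {1..k} (orbits_XX G H)" and orb1: "Orb 1 = diag_XX G H"

sublocale gp \<subseteq> group G by (rule grp)
sublocale gp \<subseteq> Hs: subgroup H G by (rule sbg)

context gp begin

abbreviation X where "X \<equiv> lcosets\<^bsub>G\<^esub> H"
abbreviation rp where "rp \<equiv> rep G H"

lemma finX: "finite X"
proof -
  have "X \<subseteq> Pow (carrier G)" using lcosets_subset_PowG[OF sbg] .
  then show ?thesis using finG by (meson finite_Pow_iff finite_subset)
qed

lemma X_cases: "x \<in> X \<Longrightarrow> \<exists>g\<in>carrier G. x = g <# H"
  by (auto simp: LCOSETS_def)

lemma coset_in_X: "g \<in> carrier G \<Longrightarrow> g <# H \<in> X"
  by (auto simp: LCOSETS_def)

lemma rep_props: assumes "x \<in> X" shows "rp x \<in> carrier G" "x = rp x <# H"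
proof -
  from X_cases[OF assms] have "\<exists>g. g \<in> carrier G \<and> x = g <# H" by blast
  hence "rp x \<in> carrier G \<and> x = rp x <# H" unfolding rep_def by (rule someI_ex)
  thus "rp x \<in> carrier G" "x = rp x <# H" by auto
qed

lemma X_sub: "x \<in> X \<Longrightarrow> x \<subseteq> carrier G"
  using Hs.lcosets_carrier[OF grp] by blast

lemma lmult_X: assumes "g \<in> carrier G" "x \<in> X" shows "g <# x \<in> X"
proof -
  have "g <# x = g <# (rp x <# H)" using rep_props(2)[OF assms(2)] by simp
  also have "\<dots> = (g \<otimes> rp x) <# H" by (rule lcos_m_assoc[OF Hs.subset assms(1) rep_props(1)[OF assms(2)]])
  finally show ?thesis using coset_in_X m_closed[OF assms(1) rep_props(1)[OF assms(2)]] by simp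
qed

lemma lmult_assoc: "g \<in> carrier G \<Longrightarrow> g' \<in> carrier G \<Longrightarrow> x \<in> X \<Longrightarrow> g <# (g' <# x) = (g \<otimes> g') <# x"
  by (simp add: lcos_m_assoc X_sub)

lemma lmult_one: "x \<in> X \<Longrightarrow> \<one> <# x = x"
  by (simp add: lcos_mult_one X_sub)

lemma lmult_inv: "g \<in> carrier G \<Longrightarrow> x \<in> X \<Longrightarrow> inv g <# (g <# x) = x"
  by (simp add: lmult_assoc lmult_one)

lemma lmult_inv': "g \<in> carrier G \<Longrightarrow> x \<in> X \<Longrightarrow> g <# (inv g <# x) = x"
  by (simp add: lmult_assoc lmult_one)

lemma lmult_bij: "g \<in> carrier G \<Longrightarrow> bij_betw (\<lambda>x. g <# x) X X"
  by (rule bij_betwI[where g="\<lambda>x. inv g <# x"]) (auto simp: lmult_X lmult_inv lmult_inv')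

lemma coset_eq_H: assumes "a \<in> carrier G" "b \<in> carrier G" "a <# H = b <# H"
  shows "inv a \<otimes> b \<in> H"
proof -
  have "b \<in> b <# H" by (rule lcos_self[OF assms(2) sbg])
  hence "b \<in> a <# H" using assms(3) by simp
  thus ?thesis using Hs.lcos_module_imp[OF grp assms(1)] by blast
qed

lemma H_in_X: "H \<in> X"
proof -
  have "\<one> <# H = H" by (rule lcos_mult_one[OF Hs.subset])
  thus ?thesis using coset_in_X[OF one_closed] by simp
qed

lemma rep_H: "rp H \<in> H"
proof -
  have "\<one> <# H = rp H <# H" using rep_props(2)[OF H_in_X] lcos_mult_one[OF Hs.subset] by simp
  hence "inv \<one> \<otimes> rp H \<in> H" by (rule coset_eq_H[OF one_closed rep_props(1)[OF H_in_X]])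
  thus ?thesis using rep_props[OF H_in_X] by simp
qed

end


context gp begin

abbreviation ac where "ac \<equiv> act G H"
abbreviation PS where "PS \<equiv> permsp G H"

lemma PS_iff: "f \<in> PS \<longleftrightarrow> (\<forall>x. x \<notin> X \<longrightarrow> f x = 0)"
  by (simp add: permsp_def)

lemma act_apply: "ac g f x = (if x \<in> X then f (inv g <# x) else 0)"
  by (simp add: act_def)

lemma act_PS: "ac g f \<in> PS"
  by (simp add: PS_iff act_apply)

lemma act_act: assumes "f \<in> PS" "g \<in> carrier G" "g' \<in> carrier G"
  shows "ac g (ac g' f) = ac (g \<otimes> g') f"
proof
  fix x show "ac g (ac g' f) x = ac (g \<otimes> g') f x"
  proof (cases "x \<in> X")
    case True
    have "inv g <# x \<in> X" using lmult_X[OF inv_closed[OF assms(2)] True] .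
    moreover have "inv g' <# (inv g <# x) = inv (g \<otimes> g') <# x"
      using assms True by (simp add: lmult_assoc inv_mult_group)
    ultimately show ?thesis using True by (simp add: act_apply)
  qed (simp add: act_apply)
qed

lemma act_one: "f \<in> PS \<Longrightarrow> ac \<one> f = f"
  by (auto simp: fun_eq_iff act_apply lmult_one PS_iff)

lemma act_add: "ac g (f + f') = ac g f + ac g f'"
  by (auto simp: fun_eq_iff act_apply)

lemma act_scale: "ac g (cscale c f) = cscale c (ac g f)"
  by (auto simp: fun_eq_iff act_apply)

lemma act_zero: "ac g 0 = 0"
  by (auto simp: fun_eq_iff act_apply)

lemma act_sum: "ac g (\<Sum>i\<in>I. f i) = (\<Sum>i\<in>I. ac g (f i))"
  by (auto simp: fun_eq_iff act_apply sum_fun_apply)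

lemma PS_subspace: "V.subspace PS"
  by (auto simp: subspace_iff PS_iff)

lemma T_props: assumes "j \<in> {1..m}"
  shows "V.subspace (T j)" "T j \<subseteq> PS" "\<And>g f. g \<in> carrier G \<Longrightarrow> f \<in> T j \<Longrightarrow> ac g f \<in> T j"
    "T j \<noteq> {0}"
  using irr assms by (auto simp: irred_subrep_def subrep_def)

lemma T_zero: "j \<in> {1..m} \<Longrightarrow> 0 \<in> T j"
  using T_props(1) V.subspace_0 by blast

lemma T_add: "j \<in> {1..m} \<Longrightarrow> f \<in> T j \<Longrightarrow> f' \<in> T j \<Longrightarrow> f + f' \<in> T j"
  using T_props(1) V.subspace_add by blast

lemma T_scale: "j \<in> {1..m} \<Longrightarrow> f \<in> T j \<Longrightarrow> cscale c f \<in> T j"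
  using T_props(1) V.subspace_scale by blast

lemma T_sum: "j \<in> {1..m} \<Longrightarrow> (\<And>i. i \<in> I \<Longrightarrow> f i \<in> T j) \<Longrightarrow> (\<Sum>i\<in>I. f i) \<in> T j"
  using T_props(1) V.subspace_sum by blast

lemma PS_sum: "(\<And>i. i \<in> I \<Longrightarrow> f i \<in> PS) \<Longrightarrow> (\<Sum>i\<in>I. f i) \<in> PS"
  using PS_subspace V.subspace_sum by blast

lemma T_PS: "j \<in> {1..m} \<Longrightarrow> f \<in> T j \<Longrightarrow> f \<in> PS"
  using T_props(2) by blast

definition restr :: "('a set \<Rightarrow> complex) \<Rightarrow> ('a set \<Rightarrow> complex)" where
  "restr f = (\<lambda>x. if x \<in> X then f x else 0)"

lemma restr_PS: "restr f \<in> PS" by (simp add: restr_def PS_iff)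
lemma restr_id: "f \<in> PS \<Longrightarrow> restr f = f" by (auto simp: restr_def PS_iff fun_eq_iff)

definition comp :: "nat \<Rightarrow> ('a set \<Rightarrow> complex) \<Rightarrow> ('a set \<Rightarrow> complex)" where
  "comp j f = (THE fs. fs \<in> (\<Pi>\<^sub>E i\<in>{1..m}. T i) \<and> restr f = (\<Sum>i\<in>{1..m}. fs i)) j"

lemma dsd_ex1: "f \<in> PS \<Longrightarrow> \<exists>!fs. fs \<in> (\<Pi>\<^sub>E i\<in>{1..m}. T i) \<and> f = (\<Sum>i\<in>{1..m}. fs i)"
  using dsd by (simp add: direct_sum_decomp_def)

lemma comp_unique: assumes "fs \<in> (\<Pi>\<^sub>E i\<in>{1..m}. T i)" "f = (\<Sum>i\<in>{1..m}. fs i)" "j \<in> {1..m}"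
  shows "comp j f = fs j"
proof -
  have fPS: "f \<in> PS" using assms(1,2) by (auto intro!: PS_sum T_PS)
  hence rf: "restr f = f" by (rule restr_id)
  have "(THE fs. fs \<in> (\<Pi>\<^sub>E i\<in>{1..m}. T i) \<and> restr f = (\<Sum>i\<in>{1..m}. fs i)) = fs"
    unfolding rf apply (rule the1_equality[OF dsd_ex1[OF fPS]]) using assms(1,2) by simp
  thus ?thesis by (simp add: comp_def)
qed

lemma comp_exists: assumes "f \<in> PS"
  shows "(\<lambda>j\<in>{1..m}. comp j f) \<in> (\<Pi>\<^sub>E i\<in>{1..m}. T i)" "f = (\<Sum>j\<in>{1..m}. comp j f)"
proof -
  obtain fs where fs: "fs \<in> (\<Pi>\<^sub>E i\<in>{1..m}. T i)" "f = (\<Sum>i\<in>{1..m}. fs i)"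
    using dsd_ex1[OF assms] by blast
  have "\<And>j. j \<in> {1..m} \<Longrightarrow> comp j f = fs j" using comp_unique[OF fs] .
  moreover have "fs = (\<lambda>j\<in>{1..m}. fs j)" using fs(1) by (auto simp: PiE_def extensional_def fun_eq_iff)
  ultimately show "(\<lambda>j\<in>{1..m}. comp j f) \<in> (\<Pi>\<^sub>E i\<in>{1..m}. T i)" "f = (\<Sum>j\<in>{1..m}. comp j f)"
    using fs by (auto intro!: sum.cong)
qed

lemma comp_in_T: "f \<in> PS \<Longrightarrow> j \<in> {1..m} \<Longrightarrow> comp j f \<in> T j"
  using comp_exists(1) by (auto simp: PiE_def Pi_def)

lemma comp_restr: "comp j (restr f) = comp j f"
proof -
  have "restr (restr f) = restr f" by (simp add: restr_id restr_PS)
  thus ?thesis by (simp add: comp_def)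
qed

lemma comp_PS: "j \<in> {1..m} \<Longrightarrow> comp j f \<in> PS"
  using comp_in_T[OF restr_PS] comp_restr T_PS by metis

lemma comp_T': "j \<in> {1..m} \<Longrightarrow> comp j f \<in> T j"
  using comp_in_T[OF restr_PS] comp_restr by metis

lemma comp_add: assumes "j \<in> {1..m}" shows "comp j (f + f') = comp j f + comp j f'"
proof -
  have "restr (f + f') = restr f + restr f'" by (auto simp: restr_def fun_eq_iff)
  let ?fs = "\<lambda>i\<in>{1..m}. comp i (restr f) + comp i (restr f')"
  have "?fs \<in> (\<Pi>\<^sub>E i\<in>{1..m}. T i)" by (auto intro!: T_add comp_in_T restr_PS)
  moreover have "restr (f + f') = (\<Sum>i\<in>{1..m}. ?fs i)"
    using comp_exists(2)[OF restr_PS, of f] comp_exists(2)[OF restr_PS, of f']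
    by (simp add: sum.distrib \<open>restr (f + f') = restr f + restr f'\<close>)
  ultimately have "comp j (restr (f + f')) = ?fs j" by (rule comp_unique[OF _ _ assms])
  thus ?thesis using assms by (simp add: comp_restr)
qed

lemma comp_scale: assumes "j \<in> {1..m}" shows "comp j (cscale c f) = cscale c (comp j f)"
proof -
  have r: "restr (cscale c f) = cscale c (restr f)" by (auto simp: restr_def fun_eq_iff)
  let ?fs = "\<lambda>i\<in>{1..m}. cscale c (comp i (restr f))"
  have "?fs \<in> (\<Pi>\<^sub>E i\<in>{1..m}. T i)" by (auto intro!: T_scale comp_in_T restr_PS)
  moreover have "restr (cscale c f) = (\<Sum>i\<in>{1..m}. ?fs i)"
  proof -
    have "cscale c (restr f) = cscale c (\<Sum>i\<in>{1..m}. comp i (restr f))"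
      using comp_exists(2)[OF restr_PS, of f] by simp
    also have "\<dots> = (\<Sum>i\<in>{1..m}. ?fs i)" by (simp add: fun_eq_iff sum_fun_apply sum_distrib_left)
    finally show ?thesis using r by simp
  qed
  ultimately have "comp j (restr (cscale c f)) = ?fs j" by (rule comp_unique[OF _ _ assms])
  thus ?thesis using assms by (simp add: comp_restr)
qed

lemma cscale0: "cscale 0 f = 0" by (simp add: cscale_def fun_eq_iff)

lemma comp_zero: "j \<in> {1..m} \<Longrightarrow> comp j 0 = 0"
  using comp_scale[of j 0 0] by (simp only: cscale0)

lemma comp_sum: "j \<in> {1..m} \<Longrightarrow> comp j (\<Sum>i\<in>I. f i) = (\<Sum>i\<in>I. comp j (f i))"
  by (induction I rule: infinite_finite_induct) (auto simp: comp_zero comp_add)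

lemma comp_T: assumes "v \<in> T j" "j \<in> {1..m}" "i \<in> {1..m}"
  shows "comp i v = (if i = j then v else 0)"
proof -
  let ?fs = "\<lambda>i\<in>{1..m}. if i = j then v else 0"
  have "?fs \<in> (\<Pi>\<^sub>E i\<in>{1..m}. T i)" using assms by (auto intro!: T_zero)
  moreover have "v = (\<Sum>i\<in>{1..m}. ?fs i)" using assms(2) by (simp add: sum.delta)
  ultimately have "comp i v = ?fs i" by (rule comp_unique[OF _ _ assms(3)])
  thus ?thesis using assms(3) by simp
qed

lemma comp_act: assumes "f \<in> PS" "g \<in> carrier G" "j \<in> {1..m}"
  shows "comp j (ac g f) = ac g (comp j f)"
proof -
  let ?fs = "\<lambda>i\<in>{1..m}. ac g (comp i f)"
  have "?fs \<in> (\<Pi>\<^sub>E i\<in>{1..m}. T i)" using assms by (auto intro!: T_props(3) comp_in_T)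
  moreover have "ac g f = (\<Sum>i\<in>{1..m}. ?fs i)"
    using arg_cong[OF comp_exists(2)[OF assms(1)], of "ac g"] by (simp add: act_sum)
  ultimately have "comp j (ac g f) = ?fs j" by (rule comp_unique[OF _ _ assms(3)])
  thus ?thesis using assms(3) by simp
qed

end


definition lin :: "(('c \<Rightarrow> complex) \<Rightarrow> ('d \<Rightarrow> complex)) \<Rightarrow> bool" where
  "lin \<phi> \<longleftrightarrow> (\<forall>x y. \<phi> (x + y) = \<phi> x + \<phi> y) \<and> (\<forall>c x. \<phi> (cscale c x) = cscale c (\<phi> x))"

lemma lin_linear: "lin \<phi> \<Longrightarrow> Vector_Spaces.linear cscale cscale \<phi>"
  by (simp add: Vector_Spaces.linear_iff vs_cscale lin_def)

lemma cscale0': "cscale 0 f = 0" by (simp add: cscale_def fun_eq_iff)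
lemma cscale_zero_right[simp]: "cscale c 0 = 0" by (simp add: cscale_def fun_eq_iff)

lemma lin_add: "lin \<phi> \<Longrightarrow> \<phi> (x + y) = \<phi> x + \<phi> y" by (simp add: lin_def)
lemma lin_scale: "lin \<phi> \<Longrightarrow> \<phi> (cscale c x) = cscale c (\<phi> x)" by (simp add: lin_def)
lemma lin_zero: "lin \<phi> \<Longrightarrow> \<phi> 0 = 0"
  using lin_scale[of \<phi> 0 0] by (simp only: cscale0')
lemma lin_sum: "lin \<phi> \<Longrightarrow> \<phi> (\<Sum>i\<in>I. f i) = (\<Sum>i\<in>I. \<phi> (f i))"
  by (induction I rule: infinite_finite_induct) (auto simp: lin_zero lin_add)
lemma lin_diff: assumes "lin \<phi>" shows "\<phi> (x - y) = \<phi> x - \<phi> y"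
proof -
  have "x - y = x + cscale (-1) y" by (auto simp: fun_eq_iff)
  moreover have "\<phi> x - \<phi> y = \<phi> x + cscale (-1) (\<phi> y)" by (auto simp: fun_eq_iff)
  ultimately show ?thesis by (simp only: lin_add[OF assms] lin_scale[OF assms])
qed

lemma lin_comp: "lin \<phi> \<Longrightarrow> lin \<psi> \<Longrightarrow> lin (\<lambda>f. \<phi> (\<psi> f))"
  by (simp add: lin_def)

context gp begin

definition intw :: "('a set \<Rightarrow> complex) set \<Rightarrow> ('a set \<Rightarrow> complex) set \<Rightarrow> (('a set \<Rightarrow> complex) \<Rightarrow> ('a set \<Rightarrow> complex)) \<Rightarrow> bool" where
  "intw U W \<phi> \<longleftrightarrow> lin \<phi> \<and> (\<forall>f\<in>U. \<phi> f \<in> W) \<and> (\<forall>g\<in>carrier G. \<forall>f\<in>U. \<phi> (ac g f) = ac g (\<phi> f))"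

lemma kernel_cases:
  assumes irU: "irred_subrep G H U" and l: "lin \<phi>"
    and eq: "\<forall>g\<in>carrier G. \<forall>f\<in>U. \<phi> (ac g f) = ac g (\<phi> f)"
  shows "{f\<in>U. \<phi> f = 0} = {0} \<or> {f\<in>U. \<phi> f = 0} = U"
proof -
  have sU: "V.subspace U" "U \<subseteq> PS" "\<forall>g\<in>carrier G. \<forall>f\<in>U. ac g f \<in> U"
    using irU by (auto simp: irred_subrep_def subrep_def)
  have "subrep G H {f\<in>U. \<phi> f = 0}"
    unfolding subrep_def
  proof (intro conjI)
    show "V.subspace {f \<in> U. \<phi> f = 0}"
      using sU(1) l by (auto simp: subspace_iff lin_add lin_scale lin_zero)
    show "{f \<in> U. \<phi> f = 0} \<subseteq> PS" using sU(2) by auto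
    show "\<forall>g\<in>carrier G. \<forall>f\<in>{f \<in> U. \<phi> f = 0}. ac g f \<in> {f \<in> U. \<phi> f = 0}"
      using sU(3) eq by (auto simp: act_zero)
  qed
  thus ?thesis using irU unfolding irred_subrep_def by blast
qed

lemma weak_schur:
  assumes irU: "irred_subrep G H U" and irW: "irred_subrep G H W" and iw: "intw U W \<phi>"
    and f0: "f0 \<in> U" "\<phi> f0 \<noteq> 0"
  shows "iso_subreps G H U W"
proof -
  have l: "lin \<phi>" and into: "\<forall>f\<in>U. \<phi> f \<in> W" and eq: "\<forall>g\<in>carrier G. \<forall>f\<in>U. \<phi> (ac g f) = ac g (\<phi> f)"
    using iw by (auto simp: intw_def)
  have sU: "V.subspace U" "U \<subseteq> PS" "\<forall>g\<in>carrier G. \<forall>f\<in>U. ac g f \<in> U"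
    using irU by (auto simp: irred_subrep_def subrep_def)
  have sW: "V.subspace W" "W \<subseteq> PS" "\<forall>g\<in>carrier G. \<forall>f\<in>W. ac g f \<in> W"
    using irW by (auto simp: irred_subrep_def subrep_def)
  have K: "{f\<in>U. \<phi> f = 0} = {0}"
    using kernel_cases[OF irU l eq] f0 by auto
  have inj: "inj_on \<phi> U"
  proof
    fix a b assume ab: "a \<in> U" "b \<in> U" "\<phi> a = \<phi> b"
    have "a - b \<in> U" using sU(1) ab by (simp add: V.subspace_diff)
    moreover have "\<phi> (a - b) = 0" using ab(3) lin_diff[OF l, of a b] by (metis diff_self)
    ultimately have "a - b \<in> {0}" using K by blast
    thus "a = b" by simp
  qed
  have "subrep G H (\<phi> ` U)"
    unfolding subrep_def
  proof (intro conjI)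
    show "V.subspace (\<phi> ` U)"
      unfolding subspace_iff
    proof (intro conjI ballI allI)
      show "0 \<in> \<phi> ` U" using lin_zero[OF l] V.subspace_0[OF sU(1)] by (metis image_eqI)
      fix x y assume "x \<in> \<phi> ` U" "y \<in> \<phi> ` U"
      then obtain a b where "a \<in> U" "b \<in> U" "x = \<phi> a" "y = \<phi> b" by auto
      thus "x + y \<in> \<phi> ` U" using lin_add[OF l, of a b] V.subspace_add[OF sU(1)] by (metis image_eqI)
    next
      fix c x assume "x \<in> \<phi> ` U"
      then obtain a where "a \<in> U" "x = \<phi> a" by auto
      thus "cscale c x \<in> \<phi> ` U" using lin_scale[OF l, of c a] V.subspace_scale[OF sU(1)] by (metis image_eqI)
    qed
    show "\<phi> ` U \<subseteq> PS" using into sW(2) by auto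
    show "\<forall>g\<in>carrier G. \<forall>f\<in>\<phi> ` U. ac g f \<in> \<phi> ` U"
    proof (intro ballI)
      fix g f assume g: "g \<in> carrier G" and "f \<in> \<phi> ` U"
      then obtain a where a: "a \<in> U" "f = \<phi> a" by auto
      hence "ac g f = \<phi> (ac g a)" using eq g by simp
      moreover have "ac g a \<in> U" using sU(3) g a by blast
      ultimately show "ac g f \<in> \<phi> ` U" by blast
    qed
  qed
  moreover have "\<phi> ` U \<subseteq> W" using into by auto
  moreover have "\<phi> ` U \<noteq> {0}" using f0 by auto
  ultimately have img: "\<phi> ` U = W" using irW unfolding irred_subrep_def by blast
  show ?thesis unfolding iso_subreps_def
    using lin_linear[OF l] inj img eq by (auto simp: bij_betw_def)
qed

lemma schur_zero:
  assumes "i \<in> {1..m}" "j \<in> {1..m}" "i \<noteq> j" "intw (T i) (T j) \<phi>" "f \<in> T i"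
  shows "\<phi> f = 0"
  using weak_schur[of "T i" "T j" \<phi> f] assms irr noniso by blast

lemma strong_schur:
  assumes irW: "irred_subrep G H W" and iw: "intw W W \<phi>"
    and ev: "v \<in> W" "v \<noteq> 0" "\<phi> v = cscale c v"
  shows "\<forall>f\<in>W. \<phi> f = cscale c f"
proof -
  have l: "lin \<phi>" and eq: "\<forall>g\<in>carrier G. \<forall>f\<in>W. \<phi> (ac g f) = ac g (\<phi> f)"
    using iw by (auto simp: intw_def)
  let ?\<psi> = "\<lambda>f. \<phi> f + cscale (-c) f"
  have l2: "lin ?\<psi>" using l by (auto simp: lin_def fun_eq_iff algebra_simps)
  have eq2: "\<forall>g\<in>carrier G. \<forall>f\<in>W. ?\<psi> (ac g f) = ac g (?\<psi> f)"
    using eq by (simp add: fun_eq_iff act_apply)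
  have "?\<psi> v = 0" unfolding ev(3) by (simp add: fun_eq_iff)
  hence "v \<in> {f\<in>W. ?\<psi> f = 0}" using ev(1) by blast
  hence K: "{f\<in>W. ?\<psi> f = 0} = W" using kernel_cases[OF irW l2 eq2] ev(2) by blast
  show ?thesis
  proof
    fix f assume "f \<in> W"
    hence "?\<psi> f = 0" using K by blast
    moreover have "\<phi> f = ?\<psi> f + cscale c f" by (simp add: fun_eq_iff)
    ultimately show "\<phi> f = cscale c f" by simp
  qed
qed

end



definition pev :: "(('c \<Rightarrow> complex) \<Rightarrow> ('c \<Rightarrow> complex)) \<Rightarrow> nat \<Rightarrow> complex poly \<Rightarrow> ('c \<Rightarrow> complex) \<Rightarrow> ('c \<Rightarrow> complex)" where
  "pev \<phi> N q v = (\<Sum>i\<le>N. cscale (coeff q i) ((\<phi> ^^ i) v))"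

lemma pev_stable: assumes "degree q \<le> N" shows "pev \<phi> N q v = pev \<phi> (degree q) q v"
  unfolding pev_def
  by (rule sum.mono_neutral_right) (use assms in \<open>auto simp: coeff_eq_0 cscale0'\<close>)

lemma pev_add: "pev \<phi> N (p + q) v = pev \<phi> N p v + pev \<phi> N q v"
  by (simp add: pev_def fun_eq_iff sum_fun_apply sum.distrib algebra_simps)

lemma pev_smult: "pev \<phi> N (smult c q) v = cscale c (pev \<phi> N q v)"
  by (simp add: pev_def fun_eq_iff sum_fun_apply sum_distrib_left algebra_simps)

lemma pev_pCons0: assumes "lin \<phi>" shows "pev \<phi> (Suc N) (pCons 0 q) v = \<phi> (pev \<phi> N q v)"
proof -
  have "pev \<phi> (Suc N) (pCons 0 q) v = (\<Sum>i\<le>N. cscale (coeff q i) ((\<phi> ^^ Suc i) v))"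
    unfolding pev_def by (subst sum.atMost_Suc_shift) (simp add: cscale0')
  also have "\<dots> = \<phi> (pev \<phi> N q v)"
    unfolding pev_def by (simp add: lin_sum[OF assms] lin_scale[OF assms])
  finally show ?thesis .
qed

definition Fl :: "(('c \<Rightarrow> complex) \<Rightarrow> ('c \<Rightarrow> complex)) \<Rightarrow> complex list \<Rightarrow> ('c \<Rightarrow> complex) \<Rightarrow> ('c \<Rightarrow> complex)" where
  "Fl \<phi> as v = foldr (\<lambda>a w. \<phi> w - cscale a w) as v"

lemma Fl_Nil[simp]: "Fl \<phi> [] v = v" by (simp add: Fl_def)
lemma Fl_Cons[simp]: "Fl \<phi> (a # as) v = \<phi> (Fl \<phi> as v) - cscale a (Fl \<phi> as v)" by (simp add: Fl_def)

lemma pev_prod: assumes "lin \<phi>"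
  shows "pev \<phi> (degree (\<Prod>a\<leftarrow>as. [:-a,1:])) (\<Prod>a\<leftarrow>as. [:-a,1:]) v = Fl \<phi> as v"
proof (induction as)
  case Nil
  show ?case by (simp add: pev_def)
next
  case (Cons a as)
  let ?Q = "\<Prod>a\<leftarrow>as. [:-a,1:]"
  let ?D = "degree ?Q"
  have eq: "(\<Prod>a\<leftarrow>a # as. [:-a,1:]) = smult (-a) ?Q + pCons 0 ?Q"
    by (simp add: mult_pCons_left)
  have dg: "degree (smult (-a) ?Q + pCons 0 ?Q) \<le> Suc ?D"
    by (rule degree_add_le) (auto intro: le_trans[OF degree_smult_le])
  have "pev \<phi> (degree (\<Prod>a\<leftarrow>a # as. [:-a,1:])) (\<Prod>a\<leftarrow>a # as. [:-a,1:]) v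
      = pev \<phi> (Suc ?D) (smult (-a) ?Q + pCons 0 ?Q) v"
    unfolding eq by (rule pev_stable[OF dg, symmetric])
  also have "\<dots> = cscale (-a) (pev \<phi> (Suc ?D) ?Q v) + \<phi> (pev \<phi> ?D ?Q v)"
    by (simp only: pev_add pev_smult pev_pCons0[OF assms])
  finally have 1: "pev \<phi> (degree (\<Prod>a\<leftarrow>a # as. [:-a,1:])) (\<Prod>a\<leftarrow>a # as. [:-a,1:]) v
     = cscale (-a) (pev \<phi> (Suc ?D) ?Q v) + \<phi> (pev \<phi> ?D ?Q v)" .
  have st: "pev \<phi> (Suc ?D) ?Q v = pev \<phi> ?D ?Q v" by (rule pev_stable) simp
  show ?case unfolding 1 st Cons.IH by (simp add: fun_eq_iff)
qed

lemma Fl_eigen: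
  assumes sW: "V.subspace W" and l: "lin \<phi>" and inv: "\<forall>w\<in>W. \<phi> w \<in> W"
  shows "w0 \<in> W \<Longrightarrow> w0 \<noteq> 0 \<Longrightarrow> Fl \<phi> as w0 = 0 \<Longrightarrow> \<exists>c v. v \<in> W \<and> v \<noteq> 0 \<and> \<phi> v = cscale c v"
proof (induction as)
  case Nil thus ?case by simp
next
  case (Cons a as)
  show ?case
  proof (cases "Fl \<phi> as w0 = 0")
    case True thus ?thesis using Cons by blast
  next
    case False
    have inW: "Fl \<phi> as w0 \<in> W"
    proof (induction as)
      case Nil thus ?case using Cons.prems by simp
    next
      case (Cons b bs)
      have "\<phi> (Fl \<phi> bs w0) \<in> W" using inv Cons.IH by blast
      moreover have "cscale b (Fl \<phi> bs w0) \<in> W" using V.subspace_scale[OF sW Cons.IH] .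
      ultimately show ?case by (simp only: Fl_Cons) (rule V.subspace_diff[OF sW])
    qed
    have "\<phi> (Fl \<phi> as w0) - cscale a (Fl \<phi> as w0) = 0" using Cons.prems(3) by (simp only: Fl_Cons)
    hence "\<phi> (Fl \<phi> as w0) = cscale a (Fl \<phi> as w0)" by (metis right_minus_eq)
    thus ?thesis using inW False by blast
  qed
qed

lemma eigen_exists:
  assumes sW: "V.subspace W" and S: "finite S" "W \<subseteq> V.span S"
    and l: "lin \<phi>" and inv: "\<forall>w\<in>W. \<phi> w \<in> W" and w0: "w0 \<in> W" "w0 \<noteq> 0"
  shows "\<exists>c v. v \<in> W \<and> v \<noteq> 0 \<and> \<phi> v = cscale c v"
proof -
  let ?n = "card S"
  define pw where "pw i = (\<phi> ^^ i) w0" for i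
  have pwW: "pw i \<in> W" for i
    unfolding pw_def by (induction i) (use w0 inv in auto)
  have "\<exists>a. (\<exists>i\<le>?n. a i \<noteq> 0) \<and> (\<Sum>i\<le>?n. cscale (a i) (pw i)) = 0"
  proof (cases "inj_on pw {..?n}")
    case True
    have "card (pw ` {..?n}) = Suc ?n" using card_image[OF True] by simp
    moreover have "pw ` {..?n} \<subseteq> V.span S" using pwW S(2) by auto
    ultimately have "V.dependent (pw ` {..?n})"
      using V.independent_span_bound[OF S(1), of "pw ` {..?n}"] by auto
    then obtain t u where tu: "finite t" "t \<subseteq> pw ` {..?n}" "\<exists>v\<in>t. u v \<noteq> 0"
      "(\<Sum>v\<in>t. cscale (u v) v) = 0"
      unfolding V.dependent_explicit by blast
    define a where "a i = (if pw i \<in> t then u (pw i) else 0)" for i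
    have "(\<Sum>i\<le>?n. cscale (a i) (pw i)) = (\<Sum>i\<in>{i\<in>{..?n}. pw i \<in> t}. cscale (u (pw i)) (pw i))"
      unfolding a_def by (rule sum.mono_neutral_cong_right) (auto simp: cscale0')
    also have "\<dots> = (\<Sum>v\<in>t. cscale (u v) v)"
    proof (rule sym, rule sum.reindex_cong[where l=pw])
      show "inj_on pw {i \<in> {..?n}. pw i \<in> t}" using True by (rule inj_on_subset) auto
      show "t = pw ` {i \<in> {..?n}. pw i \<in> t}" using tu(2) by auto
    qed simp
    finally have "(\<Sum>i\<le>?n. cscale (a i) (pw i)) = 0" using tu(4) by simp
    moreover have "\<exists>i\<le>?n. a i \<noteq> 0" using tu(2,3) unfolding a_def by auto
    ultimately show ?thesis by blast
  next
    case False
    then obtain i j where ij: "i \<le> ?n" "j \<le> ?n" "i \<noteq> j" "pw i = pw j"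
      unfolding inj_on_def by auto
    define a where "a l = (if l = i then 1 else if l = j then -1 else (0::complex))" for l
    have "(\<Sum>l\<le>?n. cscale (a l) (pw l)) = (\<Sum>l\<in>{i,j}. cscale (a l) (pw l))"
      unfolding a_def by (rule sum.mono_neutral_right) (use ij in \<open>auto simp: cscale0'\<close>)
    also have "\<dots> = 0" using ij by (simp add: a_def fun_eq_iff)
    finally have "(\<Sum>l\<le>?n. cscale (a l) (pw l)) = 0" .
    moreover have "a i \<noteq> 0" by (simp add: a_def)
    ultimately show ?thesis using ij(1) by blast
  qed
  then obtain a where a: "\<exists>i\<le>?n. a i \<noteq> 0" "(\<Sum>i\<le>?n. cscale (a i) (pw i)) = 0" by blast
  define p where "p = (\<Sum>i\<le>?n. monom (a i) i)"
  have cp: "coeff p l = (if l \<le> ?n then a l else 0)" for l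
    unfolding p_def by (simp add: coeff_sum coeff_monom)
  have dp: "degree p \<le> ?n"
    by (rule degree_le) (simp add: cp)
  have p0: "p \<noteq> 0" using a(1) cp by (metis coeff_0)
  have "pev \<phi> ?n p w0 = 0"
    using a(2) unfolding pev_def pw_def by (simp add: cp)
  hence ev0: "pev \<phi> (degree p) p w0 = 0" using pev_stable[OF dp, of \<phi> w0] by (simp only:)
  obtain as where roots: "mset as = proots p" using ex_mset by blast
  have "(\<Prod>x\<in>#proots p. [:-x, 1:]) = (\<Prod>x\<leftarrow>as. [:-x, 1:])"
    by (subst prod_mset_prod_list [symmetric]) (simp add: roots)
  hence fac: "smult (lead_coeff p) (\<Prod>a\<leftarrow>as. [:-a,1:]) = p"
    using complex_poly_decompose_multiset[of p] by simp
  have lc: "lead_coeff p \<noteq> 0" using p0 by simp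
  have "pev \<phi> (degree p) p w0 = cscale (lead_coeff p) (Fl \<phi> as w0)"
  proof -
    have "degree p = degree (\<Prod>a\<leftarrow>as. [:-a,1:])" using fac lc by (metis degree_smult_eq)
    thus ?thesis using pev_prod[OF l, of as w0] fac
      by (metis pev_smult)
  qed
  hence "Fl \<phi> as w0 = 0" using ev0 lc by simp
  thus ?thesis using Fl_eigen[OF sW l inv w0] by blast
qed



context gp begin

definition dl :: "'a set \<Rightarrow> ('a set \<Rightarrow> complex)" where
  "dl y = (\<lambda>x. if x = y then 1 else 0)"

lemma dl_PS: "y \<in> X \<Longrightarrow> dl y \<in> PS" by (auto simp: dl_def PS_iff)

lemma PS_expand: assumes "f \<in> PS" shows "f = (\<Sum>y\<in>X. cscale (f y) (dl y))"
proof
  fix x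
  have "(\<Sum>y\<in>X. cscale (f y) (dl y)) x = (\<Sum>y\<in>X. if y = x then f y else 0)"
    unfolding sum_fun_apply by (rule sum.cong) (auto simp: dl_def)
  also have "\<dots> = (if x \<in> X then f x else 0)" using finX by (simp add: sum.delta)
  also have "\<dots> = f x" using assms by (auto simp: PS_iff)
  finally show "f x = (\<Sum>y\<in>X. cscale (f y) (dl y)) x" by simp
qed

lemma PS_span: "PS \<subseteq> V.span (dl ` X)"
proof
  fix f assume "f \<in> PS"
  hence "f = (\<Sum>y\<in>X. cscale (f y) (dl y))" by (rule PS_expand)
  also have "\<dots> \<in> V.span (dl ` X)"
    by (intro V.span_sum V.span_scale V.span_base) auto
  finally show "f \<in> V.span (dl ` X)" .
qed

lemma fin_basis: assumes "W \<subseteq> PS"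
  obtains B where "B \<subseteq> W" "V.independent B" "W \<subseteq> V.span B" "card B = V.dim W" "finite B"
proof -
  obtain B where B: "B \<subseteq> W" "V.independent B" "W \<subseteq> V.span B" "card B = V.dim W"
    using V.basis_exists by blast
  have "finite B" using V.independent_span_bound[OF finite_imageI[OF finX] B(2)] B(1) assms PS_span by blast
  thus ?thesis using B that by blast
qed

lemma trace_proj:
  assumes W: "W \<subseteq> PS" and B: "B \<subseteq> W" "V.independent B" "W \<subseteq> V.span B" "finite B"
    and l: "lin P" and into: "\<forall>f\<in>PS. P f \<in> W" and idem: "\<forall>w\<in>W. P w = w"
  shows "(\<Sum>x\<in>X. P (dl x) x) = of_nat (card B)"
proof -
  let ?r = "V.representation B"
  have spn: "P (dl x) \<in> V.span B" if "x \<in> X" for x using into B(3) dl_PS[OF that] by blast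
  have "(\<Sum>x\<in>X. P (dl x) x) = (\<Sum>x\<in>X. \<Sum>b\<in>B. ?r (P (dl x)) b * b x)"
  proof (rule sum.cong[OF refl])
    fix x assume x: "x \<in> X"
    have "P (dl x) = (\<Sum>b\<in>B. cscale (?r (P (dl x)) b) b)"
      using V.sum_representation_eq[OF B(2) spn[OF x] B(4) order_refl] by simp
    thus "P (dl x) x = (\<Sum>b\<in>B. ?r (P (dl x)) b * b x)"
      by (metis (no_types, lifting) cscale_apply sum.cong sum_fun_apply)
  qed
  also have "\<dots> = (\<Sum>b\<in>B. \<Sum>x\<in>X. ?r (P (dl x)) b * b x)" by (rule sum.swap)
  also have "\<dots> = (\<Sum>b\<in>B. 1)"
  proof (rule sum.cong[OF refl])
    fix b assume b: "b \<in> B"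
    have bPS: "b \<in> PS" using b B(1) W by blast
    have "(\<Sum>x\<in>X. cscale (b x) (P (dl x))) = P (\<Sum>x\<in>X. cscale (b x) (dl x))"
      by (simp add: lin_sum[OF l] lin_scale[OF l])
    also have "\<dots> = P b" using PS_expand[OF bPS] by simp
    also have "\<dots> = b" using idem b B(1) by blast
    finally have e: "(\<Sum>x\<in>X. cscale (b x) (P (dl x))) = b" .
    have "?r (\<Sum>x\<in>X. cscale (b x) (P (dl x))) b = (\<Sum>x\<in>X. ?r (cscale (b x) (P (dl x))) b)"
      using V.representation_sum[OF B(2), of X "\<lambda>x. cscale (b x) (P (dl x))"] spn
      by (simp add: V.span_scale)
    also have "\<dots> = (\<Sum>x\<in>X. ?r (P (dl x)) b * b x)"
      by (rule sum.cong[OF refl]) (simp add: V.representation_scale[OF B(2) spn])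
    finally have "(\<Sum>x\<in>X. ?r (P (dl x)) b * b x) = ?r b b" using e by simp
    also have "\<dots> = 1" using V.representation_basis[OF B(2) b] by simp
    finally show "(\<Sum>x\<in>X. ?r (P (dl x)) b * b x) = 1" .
  qed
  also have "\<dots> = of_nat (card B)" by simp
  finally show ?thesis .
qed

end


locale gpj = gp +
  fixes j :: nat
  assumes jm: "j \<in> {1..m}"
begin

abbreviation th where "th \<equiv> \<theta> j"
abbreviation I where "I \<equiv> ip j"
abbreviation Tj where "Tj \<equiv> T j"

lemma gi: "ginv_inner G H Tj I" using ginv jm by blast

lemma ip_lin: "u \<in> Tj \<Longrightarrow> v \<in> Tj \<Longrightarrow> w \<in> Tj \<Longrightarrow> I (cscale a u + cscale b v) w = a * I u w + b * I v w"
  using gi unfolding ginv_inner_def by blast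

lemma ip_inv: "g \<in> carrier G \<Longrightarrow> u \<in> Tj \<Longrightarrow> v \<in> Tj \<Longrightarrow> I (ac g u) (ac g v) = I u v"
  using gi unfolding ginv_inner_def by blast

lemma th_props: "th \<in> Tj" "\<And>h. h \<in> H \<Longrightarrow> ac h th = th" "I th th = 1"
proof -
  have t: "th \<in> Tj \<and> (\<forall>h\<in>H. ac h th = th) \<and> I th th = 1" using th jm by blast
  thus "th \<in> Tj" "I th th = 1" by (rule conjunct1, simp only: t)
  fix h assume "h \<in> H" thus "ac h th = th" using t by blast
qed

lemma Tj_zero: "0 \<in> Tj" using T_zero[OF jm] .

lemma cscale1: "cscale 1 u = u" by (simp add: cscale_def)

lemma ip_add_left: assumes "u \<in> Tj" "v \<in> Tj" "w \<in> Tj" shows "I (u + v) w = I u w + I v w"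
  using ip_lin[OF assms, of 1 1] by (simp only: cscale1 mult_1)

lemma ip_scale_left: assumes "u \<in> Tj" "w \<in> Tj" shows "I (cscale a u) w = a * I u w"
proof -
  have e: "cscale a u + cscale 0 0 = cscale a u" by (simp add: fun_eq_iff)
  show ?thesis using ip_lin[OF assms(1) Tj_zero assms(2), of a 0] by (simp only: e mult_zero_left add_0_right)
qed

lemma ip_zero_left: assumes "w \<in> Tj" shows "I 0 w = 0"
proof -
  have e: "cscale 0 (0::'a set \<Rightarrow> complex) = 0" by (simp add: fun_eq_iff)
  show ?thesis using ip_scale_left[OF Tj_zero assms, of 0] by (simp only: e mult_zero_left)
qed

lemma ip_sum_left: assumes "finite S" "\<And>i. i \<in> S \<Longrightarrow> u i \<in> Tj" "w \<in> Tj"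
  shows "I (\<Sum>i\<in>S. u i) w = (\<Sum>i\<in>S. I (u i) w)"
  using assms(1,2)
proof (induction S rule: finite_induct)
  case empty show ?case by (simp only: sum.empty ip_zero_left[OF assms(3)])
next
  case (insert x F)
  have s: "(\<Sum>i\<in>F. u i) \<in> Tj" using insert.prems by (intro T_sum[OF jm]) auto
  have "I (\<Sum>i\<in>insert x F. u i) w = I (u x + (\<Sum>i\<in>F. u i)) w" by (simp only: sum.insert[OF insert.hyps(1,2)])
  also have "\<dots> = I (u x) w + I (\<Sum>i\<in>F. u i) w" by (rule ip_add_left[OF _ s assms(3)]) (use insert.prems in auto)
  also have "\<dots> = I (u x) w + (\<Sum>i\<in>F. I (u i) w)" using insert.IH insert.prems by simp
  finally show ?case by (simp only: sum.insert[OF insert.hyps(1,2)])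
qed

lemma ip_g_left: assumes "g \<in> carrier G" "v \<in> Tj" "w \<in> Tj"
  shows "I (ac g v) w = I v (ac (inv g) w)"
proof -
  have "I (ac g v) w = I (ac (inv g) (ac g v)) (ac (inv g) w)"
    using ip_inv[OF inv_closed[OF assms(1)]] T_props(3)[OF jm] assms by simp
  also have "ac (inv g) (ac g v) = v"
    using act_act[OF T_PS[OF jm assms(2)] inv_closed[OF assms(1)] assms(1)] act_one[OF T_PS[OF jm assms(2)]]
      assms(1) by simp
  finally show ?thesis .
qed

lemma th_PS: "th \<in> PS" using T_PS[OF jm th_props(1)] .

lemma th_coset: assumes "a \<in> carrier G" "b \<in> carrier G" "a <# H = b <# H"
  shows "ac a th = ac b th"
proof -
  have h: "inv a \<otimes> b \<in> H" using coset_eq_H[OF assms] .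
  have ai: "inv a \<in> carrier G" by (rule inv_closed[OF assms(1)])
  have hc: "inv a \<otimes> b \<in> carrier G" by (rule m_closed[OF ai assms(2)])
  have "a \<otimes> (inv a \<otimes> b) = (a \<otimes> inv a) \<otimes> b" by (rule m_assoc[symmetric, OF assms(1) ai assms(2)])
  also have "\<dots> = b" by (simp only: r_inv[OF assms(1)] l_one[OF assms(2)])
  finally have e: "a \<otimes> (inv a \<otimes> b) = b" .
  have "ac a (ac (inv a \<otimes> b) th) = ac (a \<otimes> (inv a \<otimes> b)) th" by (rule act_act[OF th_PS assms(1) hc])
  hence "ac a (ac (inv a \<otimes> b) th) = ac b th" by (simp only: e)
  thus ?thesis by (simp only: th_props(2)[OF h])
qed

lemma th_move: assumes "x \<in> X" "g \<in> carrier G"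
  shows "ac g (ac (rp x) th) = ac (rp (g <# x)) th"
proof -
  have r: "rp x \<in> carrier G" "x = rp x <# H" using rep_props[OF assms(1)] by auto
  have gx: "g <# x \<in> X" using lmult_X[OF assms(2,1)] .
  have "(g \<otimes> rp x) <# H = g <# (rp x <# H)" using lcos_m_assoc[OF Hs.subset assms(2) r(1)] by (rule sym)
  also have "\<dots> = g <# x" by (simp only: r(2)[symmetric])
  also have "\<dots> = rp (g <# x) <# H" by (rule rep_props(2)[OF gx])
  finally have e: "(g \<otimes> rp x) <# H = rp (g <# x) <# H" .
  have "ac (g \<otimes> rp x) th = ac (rp (g <# x)) th"
    by (rule th_coset[OF m_closed[OF assms(2) r(1)] rep_props(1)[OF gx] e])
  thus ?thesis using act_act[OF th_PS assms(2) r(1)] by (simp only:)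
qed

lemma tx_T: "x \<in> X \<Longrightarrow> ac (rp x) th \<in> Tj"
  using T_props(3)[OF jm rep_props(1) th_props(1)] by blast

definition L :: "('a set \<Rightarrow> complex) \<Rightarrow> ('a set \<Rightarrow> complex)" where
  "L f = (\<Sum>z\<in>X. cscale (f z) (ac (rp z) th))"

definition M :: "('a set \<Rightarrow> complex) \<Rightarrow> ('a set \<Rightarrow> complex)" where
  "M v = (\<lambda>x. if x \<in> X then I (comp j v) (ac (rp x) th) else 0)"

lemma L_lin: "lin L"
  by (simp add: lin_def L_def fun_eq_iff sum_fun_apply algebra_simps sum.distrib sum_distrib_left)

lemma L_T: "L f \<in> Tj"
  unfolding L_def by (intro T_sum[OF jm] T_scale[OF jm] tx_T)

lemma L_eq: assumes g: "g \<in> carrier G" shows "L (ac g f) = ac g (L f)"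
proof -
  have "L (ac g f) = (\<Sum>z\<in>X. cscale (f (inv g <# z)) (ac (rp z) th))"
    unfolding L_def by (rule sum.cong) (auto simp: act_apply)
  also have "\<dots> = (\<Sum>z\<in>X. cscale (f (inv g <# (g <# z))) (ac (rp (g <# z)) th))"
    by (rule sum.reindex_bij_betw[OF lmult_bij[OF g], symmetric])
  also have "\<dots> = (\<Sum>z\<in>X. ac g (cscale (f z) (ac (rp z) th)))"
    by (rule sum.cong[OF refl]) (simp add: lmult_inv g th_move act_scale)
  also have "\<dots> = ac g (L f)" unfolding L_def by (simp add: act_sum)
  finally show ?thesis .
qed

lemma L_vanish: assumes "i \<in> {1..m}" "i \<noteq> j" "f \<in> T i" shows "L f = 0"
proof (rule schur_zero[OF assms(1) jm assms(2) _ assms(3)])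
  show "intw (T i) Tj L" unfolding intw_def using L_lin L_T L_eq by blast
qed

lemma comp_lin: "i \<in> {1..m} \<Longrightarrow> lin (comp i)"
  by (simp add: lin_def comp_add comp_scale)

lemma L_comp: assumes "f \<in> PS" shows "L f = L (comp j f)"
proof -
  have "L f = (\<Sum>i\<in>{1..m}. L (comp i f))"
    using arg_cong[OF comp_exists(2)[OF assms], of L] lin_sum[OF L_lin] by simp
  also have "\<dots> = (\<Sum>i\<in>{1..m}. if i = j then L (comp j f) else 0)"
  proof (rule sum.cong[OF refl])
    fix i assume i: "i \<in> {1..m}"
    show "L (comp i f) = (if i = j then L (comp j f) else 0)"
    proof (cases "i = j")
      case False thus ?thesis using L_vanish[OF i False comp_in_T[OF assms i]] by simp
    qed simp
  qed
  also have "\<dots> = L (comp j f)" using jm by (simp add: sum.delta)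
  finally show ?thesis .
qed

lemma M_lin: "lin M"
proof -
  have "M (u + v) = M u + M v" for u v
    by (auto simp: M_def fun_eq_iff comp_add[OF jm] ip_add_left comp_T'[OF jm] tx_T)
  moreover have "M (cscale c u) = cscale c (M u)" for c u
    by (auto simp: M_def fun_eq_iff comp_scale[OF jm] ip_scale_left comp_T'[OF jm] tx_T)
  ultimately show ?thesis by (simp add: lin_def)
qed

lemma M_PS: "M v \<in> PS" by (simp add: M_def PS_iff)

lemma M_eq: assumes g: "g \<in> carrier G" and v: "v \<in> Tj" shows "M (ac g v) = ac g (M v)"
proof
  fix x show "M (ac g v) x = ac g (M v) x"
  proof (cases "x \<in> X")
    case True
    have gv: "ac g v \<in> Tj" using T_props(3)[OF jm g v] .
    have "M (ac g v) x = I (ac g v) (ac (rp x) th)"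
      using True comp_T[OF gv jm jm] by (simp add: M_def)
    also have "\<dots> = I v (ac (inv g) (ac (rp x) th))" using ip_g_left[OF g v tx_T[OF True]] .
    also have "\<dots> = I v (ac (rp (inv g <# x)) th)" using th_move[OF True inv_closed[OF g]] by simp
    also have "\<dots> = ac g (M v) x"
      using True lmult_X[OF inv_closed[OF g] True] comp_T[OF v jm jm] by (simp add: M_def act_apply)
    finally show ?thesis .
  qed (simp add: M_def act_apply)
qed

lemma M_T: assumes v: "v \<in> Tj" shows "M v \<in> Tj"
proof -
  have z: "comp i (M v) = 0" if i: "i \<in> {1..m}" "i \<noteq> j" for i
  proof (rule schur_zero[OF jm i(1) i(2)[symmetric] _ v])
    show "intw Tj (T i) (\<lambda>v. comp i (M v))"
      unfolding intw_def
    proof (intro conjI ballI)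
      show "lin (\<lambda>v. comp i (M v))" by (rule lin_comp[OF comp_lin[OF i(1)] M_lin])
      fix g f assume "g \<in> carrier G" "f \<in> Tj"
      thus "comp i (M (ac g f)) = ac g (comp i (M f))" by (simp add: M_eq comp_act[OF M_PS _ i(1)])
    next
      fix f show "comp i (M f) \<in> T i" using comp_T'[OF i(1)] .
    qed
  qed
  have "M v = (\<Sum>i\<in>{1..m}. comp i (M v))" using comp_exists(2)[OF M_PS] .
  also have "\<dots> = (\<Sum>i\<in>{1..m}. if i = j then comp j (M v) else 0)"
    by (rule sum.cong[OF refl]) (auto simp: z)
  also have "\<dots> = comp j (M v)" using jm by (simp add: sum.delta)
  finally have e: "M v = comp j (M v)" .
  have c: "comp j (M v) \<in> Tj" by (rule comp_T'[OF jm])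
  show ?thesis by (subst e) (rule c)
qed

end


context gpj begin

abbreviation Ps where "Ps \<equiv> Psi G H Tj I th"
abbreviation dd :: complex where "dd \<equiv> of_nat (V.dim Tj)"
abbreviation NN :: complex where "NN \<equiv> of_nat (card X)"

lemma NN_ne: "NN \<noteq> 0" using finX H_in_X by auto

lemma Psi_formula: assumes x: "x \<in> X" and y: "y \<in> X"
  shows "Ps (x, y) = dd / NN * I (ac (rp y) th) (ac (rp x) th)"
proof -
  have rx: "rp x \<in> carrier G" and ry: "rp y \<in> carrier G" using rep_props x y by auto
  have ic: "inv (rp x) \<otimes> rp y \<in> carrier G" using rx ry by simp
  have u: "ac (inv (rp x) \<otimes> rp y) th \<in> Tj" using T_props(3)[OF jm ic th_props(1)] .
  have "rp x \<otimes> (inv (rp x) \<otimes> rp y) = (rp x \<otimes> inv (rp x)) \<otimes> rp y"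
    by (rule m_assoc[symmetric]) (use rx ry in auto)
  also have "\<dots> = rp y" using rx ry by simp
  finally have e: "rp x \<otimes> (inv (rp x) \<otimes> rp y) = rp y" .
  have "I (ac (inv (rp x) \<otimes> rp y) th) th = I (ac (rp x) (ac (inv (rp x) \<otimes> rp y) th)) (ac (rp x) th)"
    using ip_inv[OF rx u th_props(1)] by simp
  also have "ac (rp x) (ac (inv (rp x) \<otimes> rp y) th) = ac (rp y) th"
    using act_act[OF th_PS rx ic] e by simp
  finally show ?thesis by (simp add: Psi_def spherical_def)
qed

lemma Psi_diag: assumes x: "x \<in> X" shows "Ps (x, x) = dd / NN"
proof -
  have rx: "rp x \<in> carrier G" using rep_props x by auto
  show ?thesis using Psi_formula[OF x x] ip_inv[OF rx th_props(1) th_props(1)] th_props(3) by simp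
qed

definition A :: "('a set \<Rightarrow> complex) \<Rightarrow> ('a set \<Rightarrow> complex)" where
  "A f = (\<lambda>x. if x \<in> X then (\<Sum>y\<in>X. Ps (x, y) * f y) else 0)"

lemma A_ML: "A f = cscale (dd / NN) (M (L f))"
proof
  fix x show "A f x = cscale (dd / NN) (M (L f)) x"
  proof (cases "x \<in> X")
    case True
    have "M (L f) x = I (L f) (ac (rp x) th)"
      using True comp_T[OF L_T jm jm] by (simp add: M_def)
    also have "\<dots> = (\<Sum>y\<in>X. I (cscale (f y) (ac (rp y) th)) (ac (rp x) th))"
      unfolding L_def by (rule ip_sum_left[OF finX _ tx_T[OF True]]) (intro T_scale[OF jm] tx_T)
    also have "\<dots> = (\<Sum>y\<in>X. f y * I (ac (rp y) th) (ac (rp x) th))"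
      by (rule sum.cong[OF refl]) (rule ip_scale_left[OF tx_T tx_T[OF True]])
    finally have "M (L f) x = (\<Sum>y\<in>X. f y * I (ac (rp y) th) (ac (rp x) th))" .
    moreover have "A f x = (\<Sum>y\<in>X. dd / NN * (f y * I (ac (rp y) th) (ac (rp x) th)))"
      using True by (auto simp: A_def Psi_formula intro!: sum.cong)
    ultimately show ?thesis by (simp add: sum_distrib_left)
  qed (simp add: A_def M_def)
qed

lemma A_lin: "lin A"
  unfolding lin_def A_ML using lin_comp[OF M_lin L_lin]
  by (simp add: lin_def fun_eq_iff algebra_simps)

lemma A_T: "A f \<in> Tj"
  unfolding A_ML by (intro T_scale[OF jm] M_T L_T)

lemma A_eq: assumes g: "g \<in> carrier G" and v: "v \<in> Tj" shows "A (ac g v) = ac g (A v)"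
  unfolding A_ML L_eq[OF g] M_eq[OF g L_T] act_scale ..

lemma A_intw: "intw Tj Tj A"
  unfolding intw_def using A_lin A_T A_eq by blast

lemma Tj_nz: obtains w0 where "w0 \<in> Tj" "w0 \<noteq> 0"
  using T_props(4)[OF jm] Tj_zero by blast

lemma A_scalar: obtains c where "\<forall>f\<in>Tj. A f = cscale c f"
proof -
  obtain w0 where w0: "w0 \<in> Tj" "w0 \<noteq> 0" using Tj_nz by blast
  have "Tj \<subseteq> V.span (dl ` X)" using T_props(2)[OF jm] PS_span by blast
  then obtain c v where cv: "v \<in> Tj" "v \<noteq> 0" "A v = cscale c v"
    using eigen_exists[OF T_props(1)[OF jm] finite_imageI[OF finX] _ A_lin _ w0] A_T by blast
  have "\<forall>f\<in>Tj. A f = cscale c f"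
    using strong_schur[OF _ A_intw cv] irr jm by blast
  thus ?thesis using that by blast
qed

lemma A_comp_c: assumes "\<forall>f\<in>Tj. A f = cscale c f" "f \<in> PS" shows "A f = cscale c (comp j f)"
proof -
  have "A f = cscale (dd / NN) (M (L f))" by (rule A_ML)
  also have "\<dots> = cscale (dd / NN) (M (L (comp j f)))" using L_comp[OF assms(2)] by simp
  also have "\<dots> = A (comp j f)" by (rule A_ML[symmetric])
  also have "\<dots> = cscale c (comp j f)" using assms(1) comp_in_T[OF assms(2) jm] by blast
  finally show ?thesis .
qed

lemma A_comp: assumes "f \<in> PS" shows "A f = comp j f"
proof -
  obtain c where c: "\<forall>f\<in>Tj. A f = cscale c f" using A_scalar by blast
  obtain B where B: "B \<subseteq> Tj" "V.independent B" "Tj \<subseteq> V.span B" "card B = V.dim Tj" "finite B"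
    using fin_basis[OF T_props(2)[OF jm]] by blast
  have tr: "(\<Sum>x\<in>X. comp j (dl x) x) = of_nat (card B)"
  proof (rule trace_proj[OF T_props(2)[OF jm] B(1,2,3,5) comp_lin[OF jm]])
    show "\<forall>f\<in>PS. comp j f \<in> Tj" using comp_in_T jm by blast
    show "\<forall>w\<in>Tj. comp j w = w" using comp_T jm by simp
  qed
  have "(\<Sum>x\<in>X. A (dl x) x) = (\<Sum>x\<in>X. c * comp j (dl x) x)"
    by (rule sum.cong[OF refl]) (simp add: A_comp_c[OF c dl_PS])
  also have "\<dots> = c * (\<Sum>x\<in>X. comp j (dl x) x)" by (rule sum_distrib_left[symmetric])
  also have "\<dots> = c * dd" using tr B(4) by simp
  finally have t1: "(\<Sum>x\<in>X. A (dl x) x) = c * dd" .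
  have "(\<Sum>x\<in>X. A (dl x) x) = (\<Sum>x\<in>X. Ps (x, x))"
  proof (rule sum.cong[OF refl])
    fix x assume x: "x \<in> X"
    have "A (dl x) x = (\<Sum>y\<in>X. if y = x then Ps (x, y) else 0)"
      using x by (simp add: A_def dl_def if_distrib cong: if_cong)
    also have "\<dots> = Ps (x, x)" using x finX by (simp add: sum.delta)
    finally show "A (dl x) x = Ps (x, x)" .
  qed
  also have "\<dots> = NN * (dd / NN)" by (simp add: Psi_diag)
  also have "\<dots> = dd" using NN_ne by simp
  finally have t2: "(\<Sum>x\<in>X. A (dl x) x) = dd" .
  have "dd \<noteq> 0"
  proof
    assume "dd = 0"
    hence "card B = 0" using B(4) by simp
    hence "B = {}" using B(5) by simp
    hence "Tj \<subseteq> {0}" using B(3) by simp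
    thus False using Tj_nz by blast
  qed
  hence "c = 1" using t1 t2 by simp
  thus ?thesis using A_comp_c[OF c assms] by (simp add: cscale1)
qed

lemma Psi_comp: assumes x: "x \<in> X" and y: "y \<in> X" shows "Ps (x, y) = comp j (dl y) x"
proof -
  have "A (dl y) x = (\<Sum>y'\<in>X. if y' = y then Ps (x, y') else 0)"
    using x by (auto simp: A_def dl_def intro!: sum.cong)
  also have "\<dots> = Ps (x, y)" using y finX by (simp add: sum.delta)
  finally show ?thesis using A_comp[OF dl_PS[OF y]] by simp
qed

end


context gp begin

abbreviation PP where "PP j \<equiv> Psi G H (T j) (ip j) (\<theta> j)"

lemma Psi_comp_gp: assumes j: "j \<in> {1..m}" and x: "x \<in> X" and y: "y \<in> X"
  shows "PP j (x, y) = comp j (dl y) x"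
proof -
  interpret J: gpj G H m T ip \<theta> k Orb j
    by (rule gpj.intro[OF gp_axioms]) (unfold_locales, rule j)
  show ?thesis by (rule J.Psi_comp[OF x y])
qed

lemma sum_j_Psi: assumes x: "x \<in> X" and y: "y \<in> X"
  shows "(\<Sum>j\<in>{1..m}. PP j (x, y)) = (if x = y then 1 else 0)"
proof -
  have "(\<Sum>j\<in>{1..m}. PP j (x, y)) = (\<Sum>j\<in>{1..m}. comp j (dl y) x)"
    using Psi_comp_gp x y by simp
  also have "\<dots> = (\<Sum>j\<in>{1..m}. comp j (dl y)) x" by (simp add: sum_fun_apply)
  also have "(\<Sum>j\<in>{1..m}. comp j (dl y)) = dl y" using comp_exists(2)[OF dl_PS[OF y]] by simp
  finally show ?thesis by (simp add: dl_def)
qed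

definition oneX :: "'a set \<Rightarrow> complex" where "oneX = (\<lambda>x. if x \<in> X then 1 else 0)"

lemma oneX_T1: "oneX \<in> T 1"
  unfolding T1 constants_def oneX_def by (auto simp: PS_iff)

lemma oneX_sum: "(\<Sum>y\<in>X. dl y) = oneX"
  using finX by (auto simp: fun_eq_iff sum_fun_apply dl_def oneX_def)

lemma sum_y_Psi: assumes j: "j \<in> {1..m}" and x: "x \<in> X"
  shows "(\<Sum>y\<in>X. PP j (x, y)) = (if j = 1 then 1 else 0)"
proof -
  have "(\<Sum>y\<in>X. PP j (x, y)) = (\<Sum>y\<in>X. comp j (dl y) x)"
    using Psi_comp_gp j x by simp
  also have "\<dots> = comp j (\<Sum>y\<in>X. dl y) x" by (simp add: sum_fun_apply comp_sum[OF j])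
  also have "\<dots> = comp j oneX x" by (simp add: oneX_sum)
  also have "comp j oneX = (if j = 1 then oneX else 0)"
    using comp_T[OF oneX_T1 _ j] m1 by simp
  finally show ?thesis using x by (simp add: oneX_def)
qed

definition orb :: "'a set \<Rightarrow> 'a set \<Rightarrow> ('a set \<times> 'a set) set" where
  "orb x y = {(g <# x, g <# y) | g. g \<in> carrier G}"

lemma orbits_eq: "orbits_XX G H = {orb x y | x y. x \<in> X \<and> y \<in> X}"
  by (simp add: orbits_XX_def orb_def)

lemma orb_self: "x \<in> X \<Longrightarrow> y \<in> X \<Longrightarrow> (x, y) \<in> orb x y"
  unfolding orb_def using lmult_one by (intro CollectI exI[of _ \<one>]) auto

lemma orb_move: assumes x: "x \<in> X" and y: "y \<in> X" and p: "(a, b) \<in> orb x y"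
  shows "orb a b = orb x y"
proof -
  obtain g where g: "g \<in> carrier G" "a = g <# x" "b = g <# y" using p by (auto simp: orb_def)
  show ?thesis
  proof
    show "orb a b \<subseteq> orb x y"
    proof
      fix q assume "q \<in> orb a b"
      then obtain h where h: "h \<in> carrier G" "q = (h <# a, h <# b)" by (auto simp: orb_def)
      hence "q = ((h \<otimes> g) <# x, (h \<otimes> g) <# y)" using g x y by (simp add: lmult_assoc)
      thus "q \<in> orb x y" using h g unfolding orb_def by blast
    qed
    show "orb x y \<subseteq> orb a b"
    proof
      fix q assume "q \<in> orb x y"
      then obtain h where h: "h \<in> carrier G" "q = (h <# x, h <# y)" by (auto simp: orb_def)
      have hi: "h \<otimes> inv g \<in> carrier G" using g h by simp
      have hg: "(h \<otimes> inv g) \<otimes> g = h" using g h by (simp add: m_assoc)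
      have "(h \<otimes> inv g) <# a = h <# x"
        using g(2) lmult_assoc[OF hi g(1) x] hg by simp
      moreover have "(h \<otimes> inv g) <# b = h <# y"
        using g(3) lmult_assoc[OF hi g(1) y] hg by simp
      ultimately have "q = ((h \<otimes> inv g) <# a, (h \<otimes> inv g) <# b)" using h by simp
      thus "q \<in> orb a b" using h g unfolding orb_def by (intro CollectI exI[of _ "h \<otimes> inv g"]) auto
    qed
  qed
qed

lemma orbit_uniq: assumes O1: "O1 \<in> orbits_XX G H" and O2: "O2 \<in> orbits_XX G H"
  and p: "p \<in> O1" "p \<in> O2" shows "O1 = O2"
proof -
  obtain x y where xy: "x \<in> X" "y \<in> X" "O1 = orb x y" using O1 by (auto simp: orbits_eq)
  obtain x' y' where xy': "x' \<in> X" "y' \<in> X" "O2 = orb x' y'" using O2 by (auto simp: orbits_eq)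
  obtain a b where ab: "p = (a, b)" by (cases p)
  have "orb a b = orb x y" using orb_move[OF xy(1,2)] p(1) ab xy(3) by simp
  moreover have "orb a b = orb x' y'" using orb_move[OF xy'(1,2)] p(2) ab xy'(3) by simp
  ultimately show ?thesis using xy(3) xy'(3) by simp
qed

lemma Orb_in: "i \<in> {1..k} \<Longrightarrow> Orb i \<in> orbits_XX G H"
  using orbb unfolding bij_betw_def by blast

lemma Orb_pt_uniq: assumes "i \<in> {1..k}" "i' \<in> {1..k}" "p \<in> Orb i" "p \<in> Orb i'"
  shows "i = i'"
proof -
  have "Orb i = Orb i'" by (rule orbit_uniq[OF Orb_in[OF assms(1)] Orb_in[OF assms(2)] assms(3,4)])
  thus ?thesis using inj_onD[OF bij_betw_imp_inj_on[OF orbb]] assms(1,2) by blast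
qed

lemma Orb_ex: assumes "x \<in> X" "y \<in> X"
  obtains i where "i \<in> {1..k}" "(x, y) \<in> Orb i"
proof -
  have "orb x y \<in> orbits_XX G H" unfolding orbits_eq using assms by blast
  hence "orb x y \<in> Orb ` {1..k}" using orbb unfolding bij_betw_def by simp
  then obtain i where i: "i \<in> {1..k}" "orb x y = Orb i" by blast
  have "(x, y) \<in> Orb i" using orb_self[OF assms] i(2) by simp
  thus ?thesis using that i(1) by blast
qed

lemma sum_i_char: assumes "x \<in> X" "y \<in> X"
  shows "(\<Sum>i\<in>{1..k}. charfun (Orb i) (x, y)) = 1"
proof -
  obtain i where i: "i \<in> {1..k}" "(x, y) \<in> Orb i" using Orb_ex[OF assms] by blast
  have "(\<Sum>i\<in>{1..k}. charfun (Orb i) (x, y)) = (\<Sum>i'\<in>{1..k}. if i' = i then 1 else 0)"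
  proof (rule sum.cong[OF refl])
    fix i' assume i': "i' \<in> {1..k}"
    show "charfun (Orb i') (x, y) = (if i' = i then 1 else 0)"
    proof (cases "i' = i")
      case True thus ?thesis using i(2) by (simp add: charfun_def)
    next
      case False
      hence "(x, y) \<notin> Orb i'" using Orb_pt_uniq[OF i' i(1) _ i(2)] by blast
      thus ?thesis using False by (simp add: charfun_def)
    qed
  qed
  also have "\<dots> = 1" using i(1) by simp
  finally show ?thesis .
qed

lemma k1: "1 \<in> {1..k}"
proof -
  obtain i where "i \<in> {1..k}" using Orb_ex[OF H_in_X H_in_X] by blast
  thus ?thesis by simp
qed

lemma diag_char: assumes i: "i \<in> {1..k}" and x: "x \<in> X"
  shows "charfun (Orb i) (x, x) = (if i = 1 then 1 else 0)"
proof -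
  have d: "(x, x) \<in> Orb 1" using x orb1 by (simp add: diag_XX_def)
  show ?thesis
  proof (cases "i = 1")
    case True thus ?thesis using d by (simp add: charfun_def)
  next
    case False
    have "(x, x) \<notin> Orb i" using Orb_pt_uniq[OF i k1 _ d] False by blast
    thus ?thesis using False by (simp add: charfun_def)
  qed
qed

lemma part1: assumes j: "j \<in> {1..m}"
  shows "(\<Sum>i\<in>{1..k}. inner_XX G H (charfun (Orb i)) (PP j)) = (if j = 1 then of_nat (card X) else 0)"
proof -
  have "(\<Sum>i\<in>{1..k}. inner_XX G H (charfun (Orb i)) (PP j))
      = (\<Sum>x\<in>X. \<Sum>y\<in>X. (\<Sum>i\<in>{1..k}. charfun (Orb i) (x, y)) * cnj (PP j (x, y)))"
  proof -
    have "(\<Sum>i\<in>{1..k}. \<Sum>x\<in>X. \<Sum>y\<in>X. charfun (Orb i) (x, y) * cnj (PP j (x, y)))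
        = (\<Sum>x\<in>X. \<Sum>i\<in>{1..k}. \<Sum>y\<in>X. charfun (Orb i) (x, y) * cnj (PP j (x, y)))" by (rule sum.swap)
    also have "\<dots> = (\<Sum>x\<in>X. \<Sum>y\<in>X. \<Sum>i\<in>{1..k}. charfun (Orb i) (x, y) * cnj (PP j (x, y)))"
      by (rule sum.cong[OF refl], rule sum.swap)
    finally show ?thesis unfolding inner_XX_def by (simp add: sum_distrib_right)
  qed
  also have "\<dots> = (\<Sum>x\<in>X. cnj (\<Sum>y\<in>X. PP j (x, y)))"
  proof (rule sum.cong[OF refl])
    fix x assume x: "x \<in> X"
    have "(\<Sum>y\<in>X. (\<Sum>i\<in>{1..k}. charfun (Orb i) (x, y)) * cnj (PP j (x, y))) = (\<Sum>y\<in>X. cnj (PP j (x, y)))"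
    proof (rule sum.cong[OF refl])
      fix y assume "y \<in> X"
      thus "(\<Sum>i\<in>{1..k}. charfun (Orb i) (x, y)) * cnj (PP j (x, y)) = cnj (PP j (x, y))"
        using sum_i_char[OF x] by simp
    qed
    also have "\<dots> = cnj (\<Sum>y\<in>X. PP j (x, y))" by simp
    finally show "(\<Sum>y\<in>X. (\<Sum>i\<in>{1..k}. charfun (Orb i) (x, y)) * cnj (PP j (x, y))) = cnj (\<Sum>y\<in>X. PP j (x, y))" .
  qed
  also have "\<dots> = (\<Sum>x\<in>X. (if j = 1 then 1 else 0))"
    by (rule sum.cong[OF refl]) (simp add: sum_y_Psi[OF j])
  finally show ?thesis by simp
qed

lemma part2: assumes i: "i \<in> {1..k}"
  shows "(\<Sum>j\<in>{1..m}. inner_XX G H (charfun (Orb i)) (PP j)) = (if i = 1 then of_nat (card X) else 0)"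
proof -
  have "(\<Sum>j\<in>{1..m}. inner_XX G H (charfun (Orb i)) (PP j))
      = (\<Sum>x\<in>X. \<Sum>y\<in>X. charfun (Orb i) (x, y) * cnj (\<Sum>j\<in>{1..m}. PP j (x, y)))"
  proof -
    have "(\<Sum>j\<in>{1..m}. \<Sum>x\<in>X. \<Sum>y\<in>X. charfun (Orb i) (x, y) * cnj (PP j (x, y)))
        = (\<Sum>x\<in>X. \<Sum>j\<in>{1..m}. \<Sum>y\<in>X. charfun (Orb i) (x, y) * cnj (PP j (x, y)))" by (rule sum.swap)
    also have "\<dots> = (\<Sum>x\<in>X. \<Sum>y\<in>X. \<Sum>j\<in>{1..m}. charfun (Orb i) (x, y) * cnj (PP j (x, y)))"
      by (rule sum.cong[OF refl], rule sum.swap)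
    finally show ?thesis unfolding inner_XX_def by (simp add: sum_distrib_left)
  qed
  also have "\<dots> = (\<Sum>x\<in>X. \<Sum>y\<in>X. if y = x then charfun (Orb i) (x, x) else 0)"
  proof (intro sum.cong refl)
    fix x y assume x: "x \<in> X" and y: "y \<in> X"
    have "cnj (\<Sum>j\<in>{1..m}. PP j (x, y)) = (if x = y then 1 else 0)"
      by (simp only: sum_j_Psi[OF x y]) simp
    thus "charfun (Orb i) (x, y) * cnj (\<Sum>j\<in>{1..m}. PP j (x, y)) = (if y = x then charfun (Orb i) (x, x) else 0)"
      by auto
  qed
  also have "\<dots> = (\<Sum>x\<in>X. if i = 1 then 1 else 0)"
    by (rule sum.cong[OF refl]) (simp add: finX diag_char[OF i])
  finally show ?thesis by simp
qed

end


theorem mainTheorem8: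
  fixes G :: "('a, 'b) monoid_scheme" and H :: "'a set"
    and m :: nat and T :: "nat \<Rightarrow> ('a set \<Rightarrow> complex) set"
    and ip :: "nat \<Rightarrow> ('a set \<Rightarrow> complex) \<Rightarrow> ('a set \<Rightarrow> complex) \<Rightarrow> complex"
    and \<theta> :: "nat \<Rightarrow> 'a set \<Rightarrow> complex"
    and k :: nat and Orb :: "nat \<Rightarrow> ('a set \<times> 'a set) set"
  assumes "group G" and "finite (carrier G)" and "subgroup H G"
    and "gelfand_pair G H"
    and "direct_sum_decomp G H m T"
    and "\<forall>j\<in>{1..m}. irred_subrep G H (T j)"
    and "\<forall>i\<in>{1..m}. \<forall>j\<in>{1..m}. i \<noteq> j \<longrightarrow> \<not> iso_subreps G H (T i) (T j)"
    and "1 \<le> m" and "T 1 = constants G H"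
    and "\<forall>j\<in>{1..m}. ginv_inner G H (T j) (ip j)"
    and "\<forall>j\<in>{1..m}. \<theta> j \<in> T j \<and> (\<forall>h\<in>H. act G H h (\<theta> j) = \<theta> j) \<and> ip j (\<theta> j) (\<theta> j) = 1"
    and "bij_betw Orb {1..k} (orbits_XX G H)" and "Orb 1 = diag_XX G H"
  shows "(\<forall>j\<in>{1..m}. (\<Sum>i\<in>{1..k}. inner_XX G H (charfun (Orb i)) (Psi G H (T j) (ip j) (\<theta> j)))
            = (if j = 1 then of_nat (card (lcosets\<^bsub>G\<^esub> H)) else 0))
       \<and> (\<forall>i\<in>{1..k}. (\<Sum>j\<in>{1..m}. inner_XX G H (charfun (Orb i)) (Psi G H (T j) (ip j) (\<theta> j)))
            = (if i = 1 then of_nat (card (lcosets\<^bsub>G\<^esub> H)) else 0))"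
proof -
  have "gp G H m T ip \<theta> k Orb" unfolding gp_def using assms by blast
  then interpret gp G H m T ip \<theta> k Orb .
  show ?thesis using part1 part2 by blast
qed

end
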